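(* Let $X$ be a real Banach space and $T:X\rightrightarrows X^*$ a maximal monotone operator. If $D(T)$ is bounded, then $\mathrm{conv}\,R(T)$ is weak-$*$ dense in $X^*$.
   Context: An operator $T:X\rightrightarrows X^*$ is a subset of $X\times X^*$, with domain $D(T)=\{x\;|\;\exists x^*,(x,x^* )\in T\}$ and range $R(T)=\{x^*\;|\;\exists x,(x,x^* )\in T\}$. $T$ is monotone if $\langle x-y,x^*-y^*\rangle\geq0$ for all $(x,x^* ),(y,y^* )\in T$, and maximal monotone if it is monotone and not properly contained in another monotone operator. $\mathrm{conv}$ denotes convex hull. *)

theory Defs
  imports "HOL-Analysis.Analysis"
begin

text \<open>Operators T : X \<rightrightarrows> X* are subsets of X \<times> X*, where X* is the space of
bounded linear functionals on 'a.\<close>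

definition dom_op :: "('a::real_normed_vector \<times> ('a \<Rightarrow>\<^sub>L real)) set \<Rightarrow> 'a set" where
  "dom_op T = {x. \<exists>f. (x, f) \<in> T}"

definition ran_op :: "('a::real_normed_vector \<times> ('a \<Rightarrow>\<^sub>L real)) set \<Rightarrow> ('a \<Rightarrow>\<^sub>L real) set" where
  "ran_op T = {f. \<exists>x. (x, f) \<in> T}"

definition monotone_op :: "('a::real_normed_vector \<times> ('a \<Rightarrow>\<^sub>L real)) set \<Rightarrow> bool" where
  "monotone_op T \<longleftrightarrow>
     (\<forall>x f y g. (x, f) \<in> T \<longrightarrow> (y, g) \<in> T \<longrightarrow> blinfun_apply (f - g) (x - y) \<ge> 0)"

definition maximal_monotone_op :: "('a::real_normed_vector \<times> ('a \<Rightarrow>\<^sub>L real)) set \<Rightarrow> bool" where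
  "maximal_monotone_op T \<longleftrightarrow>
     monotone_op T \<and> (\<forall>S. monotone_op S \<longrightarrow> T \<subseteq> S \<longrightarrow> S = T)"

definition weak_star_topology :: "('a::real_normed_vector \<Rightarrow>\<^sub>L real) topology" where
  "weak_star_topology =
     topology_generated_by {{f. blinfun_apply f x \<in> U} | x U. open (U :: real set)}"

end

theory Submission
  imports Defs
begin

lemma add_pair:
  fixes T :: "('a::real_normed_vector \<times> ('a \<Rightarrow>\<^sub>L real)) set"
  assumes mono: "monotone_op T" and y1: "(y1, f1) \<in> T"
    and bnd: "\<And>f. f \<in> ran_op T \<Longrightarrow> blinfun_apply f x0 \<le> c"
    and t: "t \<ge> 0"
    and cond: "\<And>y. y \<in> dom_op T \<Longrightarrow> t * (c - blinfun_apply f1 x0) \<le> l * blinfun_apply h (y1 + t *\<^sub>R x0 - y)"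
  shows "monotone_op (insert (y1 + t *\<^sub>R x0, f1 + l *\<^sub>R h) T)"
proof -
  have key: "0 \<le> blinfun_apply (f1 + l *\<^sub>R h - f) (y1 + t *\<^sub>R x0 - y)" if yf: "(y, f) \<in> T" for y f
  proof -
    have m: "0 \<le> blinfun_apply (f1 - f) (y1 - y)" using mono y1 yf unfolding monotone_op_def by blast
    have fc: "blinfun_apply f x0 \<le> c" using bnd yf unfolding ran_op_def by blast
    have cd: "t * (c - blinfun_apply f1 x0) \<le> l * blinfun_apply h (y1 + t *\<^sub>R x0 - y)"
      using cond yf unfolding dom_op_def by blast
    have "t * blinfun_apply f x0 \<le> t * c" using fc t by (simp add: mult_left_mono)
    have e: "blinfun_apply (f1 + l *\<^sub>R h - f) (y1 + t *\<^sub>R x0 - y)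
        = blinfun_apply (f1 - f) (y1 - y) + t * blinfun_apply f1 x0 - t * blinfun_apply f x0
          + l * blinfun_apply h (y1 + t *\<^sub>R x0 - y)"
      by (simp add: blinfun.bilinear_simps algebra_simps)
    show ?thesis using e m cd \<open>t * blinfun_apply f x0 \<le> t * c\<close> by (simp add: algebra_simps)
  qed
  have key2: "0 \<le> blinfun_apply (f - (f1 + l *\<^sub>R h)) (y - (y1 + t *\<^sub>R x0))" if yf: "(y, f) \<in> T" for y f
  proof -
    have "blinfun_apply (f - (f1 + l *\<^sub>R h)) (y - (y1 + t *\<^sub>R x0)) = blinfun_apply (f1 + l *\<^sub>R h - f) (y1 + t *\<^sub>R x0 - y)"
      by (simp add: blinfun.bilinear_simps algebra_simps)
    then show ?thesis using key[OF yf] by simp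
  qed
  show ?thesis using mono key key2 unfolding monotone_op_def by auto
qed


lemma nonempty_op:
  fixes T :: "('a::real_normed_vector \<times> ('a \<Rightarrow>\<^sub>L real)) set"
  assumes "maximal_monotone_op T" shows "T \<noteq> {}"
proof
  assume e: "T = {}"
  have "monotone_op {(0::'a, 0::'a \<Rightarrow>\<^sub>L real)}" unfolding monotone_op_def by auto
  then have "{(0::'a, 0::'a \<Rightarrow>\<^sub>L real)} = T" using assms e unfolding maximal_monotone_op_def by blast
  then show False using e by auto
qed

lemma key:
  fixes T :: "('a::real_normed_vector \<times> ('a \<Rightarrow>\<^sub>L real)) set"
  assumes mm: "maximal_monotone_op T" and bd: "bounded (dom_op T)" and x0: "x0 \<noteq> 0"
  shows "\<exists>f\<in>ran_op T. blinfun_apply f x0 > c"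
proof (rule ccontr)
  assume "\<not> ?thesis"
  then have bnd: "\<And>f. f \<in> ran_op T \<Longrightarrow> blinfun_apply f x0 \<le> c" by auto
  have mono: "monotone_op T" using mm unfolding maximal_monotone_op_def by blast
  obtain y1 f1 where y1: "(y1, f1) \<in> T" using nonempty_op[OF mm] by auto
  obtain M where M: "\<And>y. y \<in> dom_op T \<Longrightarrow> norm y \<le> M" using bd unfolding bounded_iff by blast
  have y1d: "y1 \<in> dom_op T" using y1 unfolding dom_op_def by blast
  have f1r: "f1 \<in> ran_op T" using y1 unfolding ran_op_def by blast
  have M0: "0 \<le> M" using M[OF y1d] norm_ge_zero[of y1] by linarith
  have nx: "norm x0 > 0" using x0 by simp
  have contra: False if t: "t \<ge> (2*M+1) / norm x0"
     and mon: "monotone_op (insert (y1 + t *\<^sub>R x0, g) T)" for t g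
  proof -
    have "insert (y1 + t *\<^sub>R x0, g) T = T" using mm mon unfolding maximal_monotone_op_def by blast
    then have "y1 + t *\<^sub>R x0 \<in> dom_op T" unfolding dom_op_def by blast
    then have le: "norm (y1 + t *\<^sub>R x0) \<le> M" using M by blast
    have t0: "t \<ge> 0" using t M0 nx by (smt (verit) divide_nonneg_pos)
    have "t * norm x0 \<ge> 2*M+1" using t nx by (simp add: field_simps)
    moreover have "norm (t *\<^sub>R x0) \<le> norm (y1 + t *\<^sub>R x0) + norm y1"
      by (metis add_diff_cancel_left' norm_triangle_ineq4 add.commute)
    moreover have "norm y1 \<le> M" using M y1d by blast
    ultimately show False using le t0 by (simp add: abs_of_nonneg)
  qed
  show False
  proof (cases "\<exists>f2\<in>ran_op T. blinfun_apply f2 x0 > blinfun_apply f1 x0")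
    case False
    define t where "t = (2*M+1) / norm x0"
    have t0: "t \<ge> 0" unfolding t_def using M0 nx by simp
    have "monotone_op (insert (y1 + t *\<^sub>R x0, f1 + 0 *\<^sub>R 0) T)"
      by (rule add_pair[OF mono y1, where c = "blinfun_apply f1 x0"]) (use False t0 in auto)
    then show False using contra[of t] unfolding t_def by auto
  next
    case True
    then obtain f2 where f2: "f2 \<in> ran_op T" "blinfun_apply f2 x0 > blinfun_apply f1 x0" by blast
    define h where "h = f2 - f1"
    define eta where "eta = blinfun_apply h x0"
    define K where "K = norm h"
    define d where "d = c - blinfun_apply f1 x0"
    define l where "l = 2 * d / eta"
    define t where "t = (2*M+1) / norm x0 + 4*K*M/eta"
    have eta: "eta > 0" unfolding eta_def h_def using f2 by (simp add: blinfun.bilinear_simps)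
    have d0: "d \<ge> 0" unfolding d_def using bnd[OF f1r] by simp
    have K0: "K \<ge> 0" unfolding K_def by simp
    have t1: "t \<ge> (2*M+1) / norm x0" unfolding t_def using K0 M0 eta by simp
    have t0: "t \<ge> 0" using t1 M0 nx by (smt (verit) divide_nonneg_pos)
    have t2: "t * eta \<ge> 4*K*M"
    proof -
      have "t * eta \<ge> (4*K*M/eta) * eta" unfolding t_def using eta M0 nx
        by (intro mult_right_mono) auto
      then show ?thesis using eta by simp
    qed
    have cond: "t * (c - blinfun_apply f1 x0) \<le> l * blinfun_apply h (y1 + t *\<^sub>R x0 - y)"
      if y: "y \<in> dom_op T" for y
    proof -
      have hy: "blinfun_apply h (y1 + t *\<^sub>R x0 - y) = t * eta + blinfun_apply h (y1 - y)"
        unfolding eta_def by (simp add: blinfun.bilinear_simps algebra_simps)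
      have "\<bar>blinfun_apply h (y1 - y)\<bar> \<le> K * norm (y1 - y)"
        unfolding K_def using norm_blinfun[of h "y1 - y"] by simp
      moreover have "norm (y1 - y) \<le> 2 * M"
        using M[OF y] M[OF y1d] norm_triangle_ineq4[of y1 y] by linarith
      moreover have "K * norm (y1 - y) \<le> K * (2*M)" using calculation(2) K0 by (rule mult_left_mono)
      ultimately have "blinfun_apply h (y1 + t *\<^sub>R x0 - y) \<ge> t * eta / 2" using hy t2 by linarith
      then have "l * blinfun_apply h (y1 + t *\<^sub>R x0 - y) \<ge> l * (t * eta / 2)"
        using d0 eta unfolding l_def by (intro mult_left_mono) auto
      moreover have "l * (t * eta / 2) = t * d" unfolding l_def using eta by (simp add: field_simps)
      ultimately have "t * d \<le> l * blinfun_apply h (y1 + t *\<^sub>R x0 - y)" by linarith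
      then show ?thesis unfolding d_def .
    qed
    have "monotone_op (insert (y1 + t *\<^sub>R x0, f1 + l *\<^sub>R h) T)"
      by (rule add_pair[OF mono y1 bnd t0 cond]) auto
    then show False using contra[OF t1] by blast
  qed
qed


lemma conv_unbounded_univ:
  fixes S :: "'e::euclidean_space set"
  assumes cS: "convex S" and unb: "\<And>a B. a \<noteq> 0 \<Longrightarrow> \<exists>v\<in>S. inner a v > B"
  shows "S = UNIV"
proof (rule ccontr)
  assume "S \<noteq> UNIV"
  then obtain p where p: "p \<notin> S" by auto
  have "convex ((+) (-p) ` S)" using cS by (rule convex_translation)
  moreover have "0 \<notin> (+) (-p) ` S" using p by auto
  ultimately obtain a where a: "a \<noteq> 0" "\<forall>x\<in>(+) (-p) ` S. 0 \<le> inner a x"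
    using separating_hyperplane_set_0 by blast
  obtain v where v: "v \<in> S" "inner (-a) v > - inner a p" using unb[of "-a" "- inner a p"] a(1) by auto
  have "0 \<le> inner a (-p + v)" using a(2) v(1) by auto
  then show False using v(2) by (simp add: inner_diff_right inner_add_right)
qed

lemma Q_lemma:
  fixes C :: "('a::real_normed_vector \<Rightarrow>\<^sub>L real) set"
  assumes cC: "convex C" and P0: "\<And>y B. y \<noteq> 0 \<Longrightarrow> \<exists>g\<in>C. blinfun_apply g y > B"
    and fin: "finite Bs"
  shows "independent Bs \<Longrightarrow> y \<notin> span Bs \<Longrightarrow> \<exists>g\<in>C. (\<forall>b\<in>Bs. blinfun_apply g b = blinfun_apply f0 b) \<and> blinfun_apply g y > M"
  using fin
proof (induction Bs arbitrary: y M rule: finite_induct)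
  case empty
  then have "y \<noteq> 0" by auto
  then show ?case using P0 by auto
next
  case (insert x F)
  have indF: "independent F" and xF: "x \<notin> span F" using insert.prems(1) insert.hyps(2)
    by (auto simp: independent_insert)
  define S where "S = {(blinfun_apply g x, blinfun_apply g y) | g. g \<in> C \<and> (\<forall>b\<in>F. blinfun_apply g b = blinfun_apply f0 b)}"
  have cS: "convex S"
  proof (rule convexI)
    fix p q and u v :: real
    assume p: "p \<in> S" and q: "q \<in> S" and uv0: "0 \<le> u" "0 \<le> v" "u + v = 1"
    then have uv: "0 \<le> u \<and> 0 \<le> v \<and> u + v = 1" by simp
    obtain g1 where g1: "p = (blinfun_apply g1 x, blinfun_apply g1 y)" "g1 \<in> C" "\<forall>b\<in>F. blinfun_apply g1 b = blinfun_apply f0 b"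
      using p unfolding S_def by blast
    obtain g2 where g2: "q = (blinfun_apply g2 x, blinfun_apply g2 y)" "g2 \<in> C" "\<forall>b\<in>F. blinfun_apply g2 b = blinfun_apply f0 b"
      using q unfolding S_def by blast
    have "u *\<^sub>R g1 + v *\<^sub>R g2 \<in> C" using cC g1(2) g2(2) uv by (simp add: convexD)
    moreover have "\<forall>b\<in>F. blinfun_apply (u *\<^sub>R g1 + v *\<^sub>R g2) b = blinfun_apply f0 b"
      using g1(3) g2(3) uv by (simp add: blinfun.bilinear_simps algebra_simps)
      (metis distrib_right mult_1)
    moreover have "u *\<^sub>R p + v *\<^sub>R q = (blinfun_apply (u *\<^sub>R g1 + v *\<^sub>R g2) x, blinfun_apply (u *\<^sub>R g1 + v *\<^sub>R g2) y)"
      using g1(1) g2(1) by (simp add: blinfun.bilinear_simps)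
    ultimately show "u *\<^sub>R p + v *\<^sub>R q \<in> S" unfolding S_def by blast
  qed
  have unb: "\<exists>w\<in>S. inner a w > B" if a: "a \<noteq> 0" for a :: "real \<times> real" and B
  proof -
    obtain a1 a2 where aa: "a = (a1, a2)" by (cases a)
    define y' where "y' = a1 *\<^sub>R x + a2 *\<^sub>R y"
    have y'F: "y' \<notin> span F"
    proof
      assume y': "y' \<in> span F"
      show False
      proof (cases "a2 = 0")
        case True
        then have "a1 \<noteq> 0" using a aa by (auto simp: zero_prod_def)
        have "x = (1/a1) *\<^sub>R y'" unfolding y'_def using True \<open>a1 \<noteq> 0\<close> by simp
        then have "x \<in> span F" using y' by (simp add: span_mul)
        then show False using xF by simp
      next
        case False
        have "y = (1/a2) *\<^sub>R (y' - a1 *\<^sub>R x)" unfolding y'_def using False by (simp add: algebra_simps)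
        moreover have "y' - a1 *\<^sub>R x \<in> span (insert x F)"
          using y' span_mono[of F "insert x F"] by (intro span_diff span_mul) (auto intro: span_base)
        ultimately have "y \<in> span (insert x F)" by (simp add: span_mul)
        then show False using insert.prems(2) by simp
      qed
    qed
    obtain g where g: "g \<in> C" "\<forall>b\<in>F. blinfun_apply g b = blinfun_apply f0 b" "blinfun_apply g y' > B"
      using insert.IH[OF indF y'F] by blast
    have "(blinfun_apply g x, blinfun_apply g y) \<in> S" unfolding S_def using g by blast
    moreover have "inner a (blinfun_apply g x, blinfun_apply g y) = blinfun_apply g y'"
      unfolding aa y'_def by (simp add: blinfun.bilinear_simps)
    ultimately show ?thesis using g(3) by (metis)
  qed
  have "S = UNIV" by (rule conv_unbounded_univ[OF cS unb])
  then have "(blinfun_apply f0 x, M + 1) \<in> S" by simp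
  then obtain g where g: "g \<in> C" "\<forall>b\<in>F. blinfun_apply g b = blinfun_apply f0 b"
     "blinfun_apply g x = blinfun_apply f0 x" "blinfun_apply g y = M + 1" unfolding S_def by auto
  show ?case using g by auto
qed


lemma E_lemma:
  fixes C :: "('a::real_normed_vector \<Rightarrow>\<^sub>L real) set"
  assumes cC: "convex C" and P0: "\<And>y B. y \<noteq> 0 \<Longrightarrow> \<exists>g\<in>C. blinfun_apply g y > B"
    and ne: "C \<noteq> {}" and fin: "finite Bs" and ind: "independent Bs"
  shows "\<exists>g\<in>C. \<forall>b\<in>Bs. blinfun_apply g b = blinfun_apply f0 b"
proof (cases "Bs = {}")
  case True then show ?thesis using ne by auto
next
  case False
  then obtain x where "x \<in> Bs" by blast
  define F where "F = Bs - {x}"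
  have BF: "Bs = insert x F" "x \<notin> F" unfolding F_def using \<open>x \<in> Bs\<close> by auto
  have finF: "finite F" using fin BF by auto
  have indF: "independent F" and xF: "x \<notin> span F" using ind BF by (auto simp: independent_insert)
  have mxF: "-x \<notin> span F" using xF span_neg by fastforce
  obtain g1 where g1: "g1 \<in> C" "\<forall>b\<in>F. blinfun_apply g1 b = blinfun_apply f0 b" "blinfun_apply g1 x > blinfun_apply f0 x"
    using Q_lemma[OF cC P0 finF indF xF] by blast
  obtain g2 where g2: "g2 \<in> C" "\<forall>b\<in>F. blinfun_apply g2 b = blinfun_apply f0 b" "blinfun_apply g2 (-x) > - blinfun_apply f0 x"
    using Q_lemma[OF cC P0 finF indF mxF] by blast
  have g2x: "blinfun_apply g2 x < blinfun_apply f0 x" using g2(3) by (simp add: blinfun.bilinear_simps)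
  define u where "u = (blinfun_apply f0 x - blinfun_apply g2 x) / (blinfun_apply g1 x - blinfun_apply g2 x)"
  have u0: "0 \<le> u" "u \<le> 1" unfolding u_def using g1(3) g2x by (auto simp: field_simps)
  define g where "g = u *\<^sub>R g1 + (1 - u) *\<^sub>R g2"
  have "g \<in> C" unfolding g_def using cC g1(1) g2(1) u0 by (simp add: convexD)
  moreover have "\<forall>b\<in>F. blinfun_apply g b = blinfun_apply f0 b"
    using g1(2) g2(2) unfolding g_def by (simp add: blinfun.bilinear_simps algebra_simps)
  moreover have "blinfun_apply g x = blinfun_apply f0 x"
  proof -
    have "blinfun_apply g x = blinfun_apply g2 x + u * (blinfun_apply g1 x - blinfun_apply g2 x)"
      unfolding g_def by (simp add: blinfun.bilinear_simps algebra_simps)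
    moreover have "u * (blinfun_apply g1 x - blinfun_apply g2 x) = blinfun_apply f0 x - blinfun_apply g2 x"
      unfolding u_def using g1(3) g2x by simp
    ultimately show ?thesis by simp
  qed
  ultimately show ?thesis using BF by auto
qed

lemma agree_span:
  fixes g f0 :: "'a::real_normed_vector \<Rightarrow>\<^sub>L real"
  assumes "\<forall>b\<in>Bs. blinfun_apply g b = blinfun_apply f0 b" and "x \<in> span Bs"
  shows "blinfun_apply g x = blinfun_apply f0 x"
proof -
  have sub: "subspace {v. blinfun_apply g v = blinfun_apply f0 v}"
    unfolding subspace_def by (auto simp: blinfun.bilinear_simps)
  have "span Bs \<subseteq> {v. blinfun_apply g v = blinfun_apply f0 v}"
    using assms(1) by (intro span_minimal[OF _ sub]) auto
  then show ?thesis using assms(2) by auto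
qed

lemma nbhd:
  assumes "generate_topology_on {{f. blinfun_apply f x \<in> U} | x U. open (U :: real set)} W" and "f0 \<in> W"
  shows "\<exists>A e. finite A \<and> e > 0 \<and> {f. \<forall>a\<in>A. \<bar>blinfun_apply f a - blinfun_apply f0 a\<bar> < e} \<subseteq> W"
  using assms
proof (induction arbitrary: f0 rule: generate_topology_on.induct)
  case Empty then show ?case by simp
next
  case (Int a b)
  have fa: "f0 \<in> a" and fb: "f0 \<in> b" using Int.prems by auto
  obtain A1 e1 where 1: "finite A1" "e1 > 0" "{f. \<forall>a\<in>A1. \<bar>blinfun_apply f a - blinfun_apply f0 a\<bar> < e1} \<subseteq> a"
    using Int.IH(1)[OF fa] by blast
  obtain A2 e2 where 2: "finite A2" "e2 > 0" "{f. \<forall>a\<in>A2. \<bar>blinfun_apply f a - blinfun_apply f0 a\<bar> < e2} \<subseteq> b"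
    using Int.IH(2)[OF fb] by blast
  have "{f. \<forall>a\<in>A1 \<union> A2. \<bar>blinfun_apply f a - blinfun_apply f0 a\<bar> < min e1 e2} \<subseteq> a \<inter> b"
  proof
    fix f assume "f \<in> {f. \<forall>a\<in>A1 \<union> A2. \<bar>blinfun_apply f a - blinfun_apply f0 a\<bar> < min e1 e2}"
    then have f: "\<forall>a\<in>A1 \<union> A2. \<bar>blinfun_apply f a - blinfun_apply f0 a\<bar> < min e1 e2" by simp
    have "f \<in> a" using f by (intro subsetD[OF 1(3)]) auto
    moreover have "f \<in> b" using f by (intro subsetD[OF 2(3)]) auto
    ultimately show "f \<in> a \<inter> b" by simp
  qed
  then show ?case using 1 2 by (intro exI[of _ "A1 \<union> A2"] exI[of _ "min e1 e2"]) auto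
next
  case (UN K)
  then obtain k where k: "k \<in> K" "f0 \<in> k" by blast
  obtain A e where Ae: "finite A" "e > 0" "{f. \<forall>a\<in>A. \<bar>blinfun_apply f a - blinfun_apply f0 a\<bar> < e} \<subseteq> k"
    using UN.IH[OF k] by blast
  then have "{f. \<forall>a\<in>A. \<bar>blinfun_apply f a - blinfun_apply f0 a\<bar> < e} \<subseteq> \<Union>K" using k(1) by blast
  then show ?case using Ae(1,2) by blast
next
  case (Basis s)
  then obtain x U where s: "s = {f. blinfun_apply f x \<in> U}" "open U" by blast
  then have "blinfun_apply f0 x \<in> U" using Basis by simp
  then obtain e where e: "e > 0" "ball (blinfun_apply f0 x) e \<subseteq> U" using s(2) openE by blast
  show ?case
  proof (intro exI conjI)
    show "{f. \<forall>a\<in>{x}. \<bar>blinfun_apply f a - blinfun_apply f0 a\<bar> < e} \<subseteq> s"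
      using e unfolding s(1) by (auto simp: dist_real_def abs_minus_commute)
  qed (use e in auto)
qed

theorem corollary4p3:
  fixes T :: "('a::banach \<times> ('a \<Rightarrow>\<^sub>L real)) set"
  assumes "maximal_monotone_op T"
    and "bounded (dom_op T)"
  shows "weak_star_topology closure_of (convex hull (ran_op T)) = UNIV"
proof -
  define C where "C = convex hull (ran_op T)"
  have cC: "convex C" unfolding C_def by simp
  have P0: "\<exists>g\<in>C. blinfun_apply g y > B" if "y \<noteq> 0" for y B
    using key[OF assms that, of B] hull_subset[of "ran_op T" convex] unfolding C_def by blast
  have ne: "C \<noteq> {}" using nonempty_op[OF assms(1)] hull_subset[of "ran_op T" convex]
    unfolding C_def ran_op_def by fastforce
  have top: "topspace weak_star_topology = UNIV"
  proof -
    have "(UNIV :: ('a \<Rightarrow>\<^sub>L real) set) \<in> {{f. blinfun_apply f x \<in> U} | x U. open (U :: real set)}"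
      by (rule CollectI, rule exI[of _ 0], rule exI[of _ UNIV]) auto
    then show ?thesis unfolding weak_star_topology_def topology_generated_by_topspace by blast
  qed
  have "f0 \<in> weak_star_topology closure_of C" for f0
    unfolding in_closure_of top
  proof (intro conjI allI impI UNIV_I)
    fix W assume W: "f0 \<in> W \<and> openin weak_star_topology W"
    then have "generate_topology_on {{f. blinfun_apply f x \<in> U} | x U. open (U :: real set)} W"
      unfolding weak_star_topology_def by (simp add: openin_topology_generated_by_iff)
    then obtain A e where Ae: "finite A" "e > 0" "{f. \<forall>a\<in>A. \<bar>blinfun_apply f a - blinfun_apply f0 a\<bar> < e} \<subseteq> W"
      using nbhd W by blast
    obtain Bs where Bs: "Bs \<subseteq> A" "independent Bs" "A \<subseteq> span Bs" using maximal_independent_subset by blast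
    have "finite Bs" using Bs(1) Ae(1) finite_subset by blast
    then obtain g where g: "g \<in> C" "\<forall>b\<in>Bs. blinfun_apply g b = blinfun_apply f0 b"
      using E_lemma[OF cC P0 ne _ Bs(2)] by blast
    have "\<forall>a\<in>A. blinfun_apply g a = blinfun_apply f0 a" using agree_span[OF g(2)] Bs(3) by blast
    then have "g \<in> W" using Ae by auto
    then show "\<exists>y. y \<in> C \<and> y \<in> W" using g by blast
  qed
  then show ?thesis unfolding C_def by blast
qed

end
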